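(* Let $q$ be an odd prime power and $n\ge1$ an integer with $\gcd(n+1,q)=1$. If $q>2n$, then there exists $a\in\mathbb{F}_q$ such that $C_n(a)$ is LCD.
   Context: For $a\in\mathbb{F}_q$ and $n \ge 1$, $T_n(a)$ denotes the $n\times n$ symmetric tridiagonal Toeplitz matrix over $\mathbb{F}_q$ with all diagonal entries equal to $a$, all entries on the first super- and sub-diagonals equal to $1$, and all other entries $0$. $C_n(a)$ is the $[2n,n]$ linear code over $\mathbb{F}_q$ with generator matrix $[I_n \mid T_n(a)]$. A linear code $C$ is LCD if $C\cap C^\perp=\{0\}$ (Euclidean dual). *)

theory Defs
  imports Main "HOL-Computational_Algebra.Primes"
begin

text \<open>Vectors of length N over a field are modelled as functions nat => 'a
  vanishing outside {..<N}; matrices as functions nat => nat => 'a read on the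
  relevant index ranges.\<close>

definition vecs :: "nat \<Rightarrow> (nat \<Rightarrow> 'a::zero) set" where
  "vecs N = {v. \<forall>j\<ge>N. v j = 0}"

definition inner_prod :: "nat \<Rightarrow> (nat \<Rightarrow> 'a::comm_ring_1) \<Rightarrow> (nat \<Rightarrow> 'a) \<Rightarrow> 'a" where
  "inner_prod N u v = (\<Sum>j<N. u j * v j)"

definition row_code :: "nat \<Rightarrow> nat \<Rightarrow> (nat \<Rightarrow> nat \<Rightarrow> 'a::comm_ring_1) \<Rightarrow> (nat \<Rightarrow> 'a) set" where
  "row_code k N G = {v. \<exists>c. v = (\<lambda>j. if j < N then (\<Sum>i<k. c i * G i j) else 0)}"

definition dual_code :: "nat \<Rightarrow> (nat \<Rightarrow> 'a::comm_ring_1) set \<Rightarrow> (nat \<Rightarrow> 'a) set" where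
  "dual_code N C = {v \<in> vecs N. \<forall>u\<in>C. inner_prod N u v = 0}"

definition is_LCD :: "nat \<Rightarrow> (nat \<Rightarrow> 'a::comm_ring_1) set \<Rightarrow> bool" where
  "is_LCD N C \<longleftrightarrow> C \<inter> dual_code N C = {(\<lambda>_. 0)}"

definition tridiag :: "nat \<Rightarrow> 'a::comm_ring_1 \<Rightarrow> nat \<Rightarrow> nat \<Rightarrow> 'a" where
  "tridiag n a i j = (if i < n \<and> j < n then
      (if i = j then a else if i = j + 1 \<or> j = i + 1 then 1 else 0) else 0)"

definition gen_matrix :: "nat \<Rightarrow> 'a::comm_ring_1 \<Rightarrow> nat \<Rightarrow> nat \<Rightarrow> 'a" where
  "gen_matrix n a i j = (if j < n then (if i = j then 1 else 0) else tridiag n a i (j - n))"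

definition C_code :: "nat \<Rightarrow> 'a::comm_ring_1 \<Rightarrow> (nat \<Rightarrow> 'a) set" where
  "C_code n a = row_code n (2 * n) (gen_matrix n a)"

end

theory Submission
  imports Defs "Jordan_Normal_Form.Char_Poly"
begin

definition tc :: "nat \<Rightarrow> 'a::comm_ring_1 \<Rightarrow> (nat \<Rightarrow> 'a) \<Rightarrow> nat \<Rightarrow> 'a" where
  "tc n a c k = (\<Sum>i<n. c i * tridiag n a i k)"

definition Bm :: "nat \<Rightarrow> 'a::comm_ring_1 mat" where
  "Bm n = mat (2*n) (2*n) (\<lambda>(i,j). if i<n then (if j<n then tridiag n 0 i j else if j = n+i then 1 else 0)
        else (if j<n then (if i = n+j then -1 else 0) else tridiag n 0 (i-n) (j-n)))"

lemma tridiag_sym: "tridiag n a i k = tridiag n a k i"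
  unfolding tridiag_def by auto

lemma tridiag0: "i<n \<Longrightarrow> j<n \<Longrightarrow> tridiag n 0 i j = tridiag n a i j - (if i = j then a else 0)"
  unfolding tridiag_def by auto

lemma split2: "(\<Sum>j<2*(n::nat). f j) = (\<Sum>j<n. f j) + (\<Sum>j<n. f (n+j))"
proof -
  have "(\<Sum>j<2*n. f j) = (\<Sum>j<n+n. f j)" by (simp add: mult_2)
  also have "\<dots> = (\<Sum>j<n. f j) + (\<Sum>j<n. f (n+j))"
    by (simp add: sum.atLeastLessThan_shift_bounds add.commute lessThan_atLeast0 sum.atLeastLessThan_concat[symmetric])
       (metis add_0 sum.atLeastLessThan_concat sum.shift_bounds_nat_ivl le_add1 add.commute zero_le)
  finally show ?thesis .
qed

lemma codeword:
  fixes a :: "'a::comm_ring_1"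
  shows "(\<Sum>i<n. c i * gen_matrix n a i j) = (if j<n then c j else tc n a c (j-n))"
proof (cases "j<n")
  case True
  then have "\<And>i. c i * gen_matrix n a i j = (if i = j then c j else 0)"
    unfolding gen_matrix_def by simp
  then show ?thesis using True by simp
next
  case False
  then show ?thesis unfolding gen_matrix_def tc_def by simp
qed

lemma delta_sum: "k<(n::nat) \<Longrightarrow> (\<Sum>i<n. (if i = k then (1::'a::comm_ring_1) else 0) * f i) = f k"
proof -
  assume k: "k<n"
  have "(\<Sum>i<n. (if i = k then (1::'a) else 0) * f i) = (\<Sum>i<n. if i = k then f k else 0)"
    by (rule sum.cong) auto
  also have "\<dots> = f k" using k by (subst sum.delta) auto
  finally show ?thesis .
qed

lemma codeword_eq:
  fixes a :: "'a::comm_ring_1"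
  shows "(\<lambda>j. if j < 2*n then (\<Sum>i<n. c i * gen_matrix n a i j) else 0)
     = (\<lambda>j. if j<n then c j else if j < 2*n then tc n a c (j-n) else 0)"
  by (rule ext) (simp add: codeword)

lemma dual_eq:
  fixes a :: "'a::comm_ring_1"
  assumes v: "v \<in> C_code n a \<inter> dual_code (2*n) (C_code n a)"
    and vc: "v = (\<lambda>j. if j < 2*n then (\<Sum>i<n. c i * gen_matrix n a i j) else 0)"
    and k: "k < n"
  shows "c k + (\<Sum>j<n. tridiag n a k j * tc n a c j) = 0"
proof -
  define d where "d = (\<lambda>i. if i = k then (1::'a) else 0)"
  define u where "u = (\<lambda>j. if j < 2*n then (\<Sum>i<n. d i * gen_matrix n a i j) else 0)"
  have uC: "u \<in> C_code n a" unfolding C_code_def row_code_def u_def by blast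
  with v have "inner_prod (2*n) u v = 0" unfolding dual_code_def by blast
  moreover have "tc n a d j = tridiag n a k j" for j
    unfolding tc_def d_def using k by (rule delta_sum)
  moreover have "d k = 1" unfolding d_def by simp
  moreover have "(\<Sum>j<n. d j * c j) = c k" unfolding d_def using k by (rule delta_sum)
  ultimately show ?thesis
    unfolding inner_prod_def split2 vc u_def codeword_eq by simp
qed


lemma Bm_row1:
  assumes i: "i < n"
  shows "(\<Sum>j<2*n. Bm n $$ (i,j) * f j) = (\<Sum>j<n. tridiag n 0 i j * f j) + (f (n+i) :: 'a::comm_ring_1)"
proof -
  have 1: "(\<Sum>j<n. Bm n $$ (i,j) * f j) = (\<Sum>j<n. tridiag n 0 i j * f j)"
    by (rule sum.cong) (use i in \<open>auto simp: Bm_def\<close>)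
  have "(\<Sum>j<n. Bm n $$ (i,n+j) * f (n+j)) = (\<Sum>j<n. if j = i then f (n+i) else 0)"
    by (rule sum.cong) (use i in \<open>auto simp: Bm_def\<close>)
  also have "\<dots> = f (n+i)" using i by (subst sum.delta) auto
  finally show ?thesis using 1 by (simp add: split2)
qed

lemma Bm_row2:
  assumes m: "m < n"
  shows "(\<Sum>j<2*n. Bm n $$ (n+m,j) * f j) = - f m + (\<Sum>j<n. tridiag n 0 m j * (f (n+j) :: 'a::comm_ring_1))"
proof -
  have 1: "(\<Sum>j<n. Bm n $$ (n+m,n+j) * f (n+j)) = (\<Sum>j<n. tridiag n 0 m j * f (n+j))"
    by (rule sum.cong) (use m in \<open>auto simp: Bm_def\<close>)
  have "(\<Sum>j<n. Bm n $$ (n+m,j) * f j) = (\<Sum>j<n. if j = m then - f m else 0)"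
    by (rule sum.cong) (use m in \<open>auto simp: Bm_def\<close>)
  also have "\<dots> = - f m" using m by (subst sum.delta) auto
  finally show ?thesis using 1 by (simp add: split2)
qed

lemma S_sum:
  fixes a :: "'a::comm_ring_1"
  assumes i: "i < n"
  shows "(\<Sum>j<n. tridiag n 0 i j * f j) = (\<Sum>j<n. tridiag n a i j * f j) - a * f i"
proof -
  have "(\<Sum>j<n. tridiag n 0 i j * f j) = (\<Sum>j<n. tridiag n a i j * f j - (if j = i then a * f i else 0))"
    by (rule sum.cong) (use i in \<open>auto simp: tridiag0[of i n _ a] algebra_simps\<close>)
  also have "\<dots> = (\<Sum>j<n. tridiag n a i j * f j) - a * f i"
    using i by (simp add: sum_subtractf)
  finally show ?thesis .
qed


lemma mulvec_sum: "i < dim_row A \<Longrightarrow> dim_col A = m \<Longrightarrow> dim_vec w = m \<Longrightarrow>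
   (A *\<^sub>v w) $ i = (\<Sum>j<m. A $$ (i,j) * w $ j)"
  by (simp add: scalar_prod_def atLeast0LessThan)

lemma eig:
  fixes a :: "'a::field"
  assumes nl: "\<not> is_LCD (2*n) (C_code n a)"
  shows "eigenvalue (Bm n) (-a)"
proof -
  have z1: "(\<lambda>_. 0::'a) \<in> C_code n a"
    unfolding C_code_def row_code_def by (rule CollectI, rule exI[of _ "\<lambda>_. 0"]) auto
  have z2: "(\<lambda>_. 0::'a) \<in> dual_code (2*n) (C_code n a)"
    unfolding dual_code_def vecs_def inner_prod_def by auto
  obtain v where v: "v \<in> C_code n a \<inter> dual_code (2*n) (C_code n a)" and vnz: "v \<noteq> (\<lambda>_. 0)"
    using nl z1 z2 unfolding is_LCD_def by blast
  then obtain c where vc: "v = (\<lambda>j. if j < 2*n then (\<Sum>i<n. c i * gen_matrix n a i j) else 0)"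
    unfolding C_code_def row_code_def by blast
  have E: "c k + (\<Sum>j<n. tridiag n a k j * tc n a c j) = 0" if "k<n" for k
    using dual_eq[OF v vc that] .
  define t where "t = tc n a c"
  have tsym: "(\<Sum>j<n. tridiag n a i j * c j) = t i" for i
    unfolding t_def tc_def by (rule sum.cong) (auto simp: tridiag_sym mult.commute)
  define w where "w = vec (2*n) (\<lambda>j. if j<n then c j else - t (j-n))"
  have dB: "dim_row (Bm n :: 'a mat) = 2*n" "dim_col (Bm n :: 'a mat) = 2*n" unfolding Bm_def by auto
  have wc: "w \<in> carrier_vec (dim_row (Bm n :: 'a mat))" unfolding w_def dB by auto
  have vj: "v j = (if j<n then c j else if j < 2*n then t (j-n) else 0)" for j
    unfolding vc codeword_eq t_def by simp
  obtain j where j: "v j \<noteq> 0" using vnz by auto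
  have wnz: "w \<noteq> 0\<^sub>v (dim_row (Bm n :: 'a mat))"
  proof
    assume "w = 0\<^sub>v (dim_row (Bm n :: 'a mat))"
    then have "w $ j = 0" if "j < 2*n" for j using that by (simp add: dB(1))
    then have h: "(if j < n then c j else - t (j - n)) = 0" if "j < 2*n" for j
      using that unfolding w_def by simp
    show False
    proof (cases "j < n")
      case True then show False using j h[of j] unfolding vj by simp
    next
      case False then show False using j h[of j] unfolding vj by (auto split: if_splits)
    qed
  qed
  have ev: "Bm n *\<^sub>v w = (-a) \<cdot>\<^sub>v w"
  proof (rule eq_vecI)
    show "dim_vec (Bm n *\<^sub>v w) = dim_vec ((-a) \<cdot>\<^sub>v w)" using dB unfolding w_def by simp
    fix i assume "i < dim_vec ((-a) \<cdot>\<^sub>v w)"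
    then have i: "i < 2*n" unfolding w_def by simp
    have lhs: "(Bm n *\<^sub>v w) $ i = (\<Sum>j<2*n. Bm n $$ (i,j) * w $ j)"
      using i dB by (intro mulvec_sum) (auto simp: w_def)
    have wv: "(\<Sum>j<2*n. Bm n $$ (i,j) * w $ j) = (\<Sum>j<2*n. Bm n $$ (i,j) * (\<lambda>j. if j<n then c j else - t (j-n)) j)"
      by (rule sum.cong) (auto simp: w_def)
    show "(Bm n *\<^sub>v w) $ i = ((-a) \<cdot>\<^sub>v w) $ i"
    proof (cases "i < n")
      case True
      have aux: "(\<Sum>x<n. tridiag n a i x * (if x < n then c x else - t (x - n))) = (\<Sum>j<n. tridiag n a i j * c j)"
        by (rule sum.cong) auto
      have "(Bm n *\<^sub>v w) $ i = (\<Sum>j<n. tridiag n a i j * c j) - a * c i - t i"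
        unfolding lhs wv Bm_row1[OF True] using True
        by (simp add: S_sum[OF True, of _ a] aux)
      also have "\<dots> = - a * c i" by (simp add: tsym)
      finally show ?thesis using True i unfolding w_def by simp
    next
      case False
      define m where "m = i - n"
      have m: "m < n" "i = n + m" using i False unfolding m_def by auto
      have "(Bm n *\<^sub>v w) $ i = (\<Sum>j<2*n. Bm n $$ (n+m,j) * (\<lambda>j. if j<n then c j else - t (j-n)) j)"
        using lhs wv m(2) by simp
      also have "\<dots> = - c m + (\<Sum>j<n. tridiag n 0 m j * (- t j))"
        unfolding Bm_row2[OF m(1)] using m(1) by simp
      also have "\<dots> = - c m - ((\<Sum>j<n. tridiag n a m j * t j) - a * t m)"
        using S_sum[OF m(1), of "\<lambda>j. - t j" a] by (simp add: sum_negf)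
      also have "\<dots> = a * t m" using E[OF m(1)] unfolding t_def by (simp add: algebra_simps)
      finally show ?thesis using m i unfolding w_def by simp
    qed
  qed
  show ?thesis unfolding eigenvalue_def eigenvector_def using wc wnz ev by blast
qed


theorem corollary2p2:
  fixes q n :: nat
  assumes card: "card (UNIV :: 'a::{finite,field} set) = q"
    and q_odd: "odd q"
    and pp: "\<exists>p k. prime p \<and> k \<ge> 1 \<and> q = p ^ k"
    and n_pos: "n \<ge> 1"
    and cop: "gcd (n + 1) q = 1"
    and big: "q > 2 * n"
  shows "\<exists>a::'a. is_LCD (2 * n) (C_code n a)"
proof (rule ccontr)
  assume "\<not> (\<exists>a::'a. is_LCD (2 * n) (C_code n a))"
  then have all: "eigenvalue (Bm n :: 'a mat) (-a)" for a using eig by blast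
  have Bc: "(Bm n :: 'a mat) \<in> carrier_mat (2*n) (2*n)" unfolding Bm_def by auto
  have dm: "degree (char_poly (Bm n :: 'a mat)) = 2*n" "coeff (char_poly (Bm n :: 'a mat)) (2*n) = 1"
    using degree_monic_char_poly[OF Bc] by auto
  then have nz: "char_poly (Bm n :: 'a mat) \<noteq> 0" by auto
  have "UNIV = uminus ` {k. poly (char_poly (Bm n :: 'a mat)) k = 0}"
  proof -
    have "x \<in> uminus ` {k. poly (char_poly (Bm n :: 'a mat)) k = 0}" for x
    proof (rule image_eqI[of x uminus "-x"])
      show "x = - (- x)" by simp
      show "- x \<in> {k. poly (char_poly (Bm n :: 'a mat)) k = 0}"
        using all[of x] eigenvalue_root_char_poly[OF Bc, of "-x"] by simp
    qed
    then show ?thesis by blast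
  qed
  then have "q \<le> card {k. poly (char_poly (Bm n :: 'a mat)) k = 0}"
    using card card_image_le[of "{k. poly (char_poly (Bm n :: 'a mat)) k = 0}" uminus]
    by (metis finite)
  also have "\<dots> \<le> 2*n" using card_poly_roots_bound[OF nz] dm(1) by linarith
  finally show False using big by simp
qed

end
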